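(* For each $n\in\mathbb{N}$ there is a constant $C_n\ge1$ such that for every $s>0$ and every integer $k>1$, the finite group $\mathbb{Z}_k^n$ with the metric $d_k^n$ has a cover $\{\mathcal U_0,\dots,\mathcal U_n\}$ such that the $s$-scale connected components of each $\mathcal U_i$ have diameter at most $C_n s$.
   Context: $d_k$ is the canonical word metric on the cyclic group $\mathbb{Z}_k$ (with respect to the generator $\pm1$), i.e. $d_k(a,b)=\min\{|a-b| \bmod k,\ k-(|a-b|\bmod k)\}$, and $d_k^n((x_1,\dots,x_n),(y_1,\dots,y_n))=\sum_{i=1}^n d_k(x_i,y_i)$. For $s>0$, the $s$-scale connected components of a subset $U$ are the classes of the relation "joined by a finite chain $x_0,\dots,x_m$ in $U$ with $d(x_i,x_{i+1})<s$". *)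

theory Defs
  imports Complex_Main
begin

text \<open>Canonical word metric on the cyclic group Z_k (elements represented by integers).\<close>
definition dk :: "int \<Rightarrow> int \<Rightarrow> int \<Rightarrow> int" where
  "dk k a b = min (\<bar>a - b\<bar> mod k) (k - (\<bar>a - b\<bar> mod k))"

definition Zkn :: "int \<Rightarrow> nat \<Rightarrow> int list set" where
  "Zkn k n = {xs. length xs = n \<and> set xs \<subseteq> {0..<k}}"

definition dkn :: "int \<Rightarrow> int list \<Rightarrow> int list \<Rightarrow> int" where
  "dkn k xs ys = (\<Sum>i<length xs. dk k (xs ! i) (ys ! i))"

definition scale_rel :: "('a \<Rightarrow> 'a \<Rightarrow> real) \<Rightarrow> real \<Rightarrow> 'a set \<Rightarrow> ('a \<times> 'a) set" where
  "scale_rel d s U = ({(x, y). x \<in> U \<and> y \<in> U \<and> d x y < s})\<^sup>*"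

definition scale_components :: "('a \<Rightarrow> 'a \<Rightarrow> real) \<Rightarrow> real \<Rightarrow> 'a set \<Rightarrow> 'a set set" where
  "scale_components d s U = {scale_rel d s U `` {x} | x. x \<in> U}"

definition diam_d :: "('a \<Rightarrow> 'a \<Rightarrow> real) \<Rightarrow> 'a set \<Rightarrow> real" where
  "diam_d d A = Sup {d x y | x y. x \<in> A \<and> y \<in> A}"

end

theory Submission
  imports Defs
begin


lemma dk_alt: "k > 0 \<Longrightarrow> dk k a b = min ((a-b) mod k) (k - (a-b) mod k)"
proof -
  assume k: "k > 0"
  show ?thesis
  proof (cases "a - b \<ge> 0")
    case True then show ?thesis by (simp add: dk_def)
  next
    case False
    have e: "\<bar>a-b\<bar> = -(a-b)" using False by simp
    show ?thesis
    proof (cases "(a-b) mod k = 0")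
      case True
      then have "k dvd (a - b)" by (simp add: mod_eq_0_iff_dvd)
      then have "k dvd (b - a)" by (simp add: dvd_diff_commute)
      then have "(-(a-b)) mod k = 0" by simp
      then show ?thesis using True e by (simp add: dk_def)
    next
      case F2: False
      then have "(-(a-b)) mod k = k - (a-b) mod k" using zmod_zminus1_eq_if[of "a-b" k] by simp
      then show ?thesis using e by (simp add: dk_def min.commute)
    qed
  qed
qed

lemma dk_nonneg: assumes "k > 0" shows "0 \<le> dk k a b"
proof -
  have f: "(a-b) mod k < k" "0 \<le> (a-b) mod k" using assms by simp_all
  then show ?thesis using dk_alt[OF assms] by simp
qed

lemma dk_le_k: assumes "k > 0" shows "dk k a b \<le> k"
proof -
  have f: "(a-b) mod k < k" using assms by simp
  have "min ((a-b) mod k) (k - (a-b) mod k) \<le> k" using f by (simp add: min_le_iff_disj)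
  then show ?thesis using dk_alt[OF assms] by simp
qed

lemma dk_shift: "k > 0 \<Longrightarrow> dk k ((a - c) mod k) ((b - c) mod k) = dk k a b"
proof -
  assume k: "k > 0"
  have "((a - c) mod k - (b - c) mod k) mod k = (a - b) mod k"
    by (simp add: mod_diff_eq)
  then show ?thesis using k by (simp add: dk_alt)
qed

lemma dk_ex: "k > 0 \<Longrightarrow> \<exists>z. dk k a b = \<bar>a - b - z*k\<bar>"
proof -
  assume k: "k > 0"
  define q where "q = (a-b) mod k"
  define w where "w = (a-b) div k"
  have d: "a - b = q + w*k" unfolding q_def w_def by (simp add: mult.commute)
  have q: "0 \<le> q" "q < k" using k unfolding q_def by auto
  show ?thesis
  proof (cases "q \<le> k - q")
    case True
    then have "dk k a b = \<bar>a - b - w*k\<bar>" using k q d by (simp add: dk_alt q_def[symmetric])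
    then show ?thesis by blast
  next
    case False
    then have "dk k a b = \<bar>a - b - (w+1)*k\<bar>" using k q d by (simp add: dk_alt q_def[symmetric] algebra_simps)
    then show ?thesis by blast
  qed
qed

lemma dk_le: "k > 0 \<Longrightarrow> dk k a b \<le> \<bar>a - b - z*k\<bar>"
proof -
  assume k: "k > 0"
  define q where "q = (a-b) mod k"
  define w where "w = (a-b) div k"
  have d: "a - b - z*k = q + (w-z)*k" unfolding q_def w_def by (simp add: algebra_simps)
  have q: "0 \<le> q" "q < k" using k unfolding q_def by auto
  have dk: "dk k a b = min q (k - q)" using k by (simp add: dk_alt q_def)
  show ?thesis
  proof (cases "w - z \<ge> 0")
    case True
    then have "0 \<le> (w-z)*k" using k by simp
    then show ?thesis using d dk q by linarith
  next
    case False
    then have "(w-z)*k \<le> -k" using k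
      using mult_right_mono[of "w-z" "-1" k] by simp
    then show ?thesis using d dk q by linarith
  qed
qed


definition cellf :: "int \<Rightarrow> int \<Rightarrow> int \<Rightarrow> int" where
  "cellf k L p = min (p div L) (k div L - 1)"

definition goodp :: "int \<Rightarrow> int \<Rightarrow> int \<Rightarrow> int \<Rightarrow> bool" where
  "goodp k r L p \<longleftrightarrow> (\<forall>j. 0 \<le> j \<and> j < k div L \<longrightarrow> r < dk k p (j*L))"

definition posn :: "int \<Rightarrow> int \<Rightarrow> nat \<Rightarrow> int \<Rightarrow> int" where
  "posn k m i t = (t - int i * m) mod k"

lemma cell_mono: "0 < L \<Longrightarrow> p \<le> p' \<Longrightarrow> cellf k L p \<le> cellf k L p'"
  unfolding cellf_def using zdiv_mono1[of p p' L] by (simp add: min_def)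

lemma cell_same_aux:
  assumes k: "k > 0" and L: "L > 0" "L \<le> k" and p: "0 \<le> p" "p \<le> p'" "p' < k"
    and d: "p' - p \<le> r" and g: "goodp k r L p"
  shows "cellf k L p = cellf k L p'"
proof (rule ccontr)
  assume ne: "cellf k L p \<noteq> cellf k L p'"
  have lt: "cellf k L p < cellf k L p'" using cell_mono[OF L(1) p(2), of k] ne by simp
  define j where "j = cellf k L p'"
  have Q: "1 \<le> k div L" using L zdiv_mono1[of L k L] by simp
  have j1: "j \<le> k div L - 1" unfolding j_def cellf_def by simp
  have j2: "j \<le> p' div L" unfolding j_def cellf_def by simp
  have cp: "cellf k L p = p div L" using lt j1 unfolding j_def cellf_def by (simp add: min_def split: if_splits)
  have pd: "0 \<le> p div L" using p L by (simp add: pos_imp_zdiv_nonneg_iff)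
  have j0: "0 \<le> j" using lt cp pd j_def by simp
  have "p < (p div L + 1) * L" using L(1)
    by (metis add.commute mult.commute pos_mod_bound div_mult_mod_eq distrib_left mult_1_right add_less_cancel_left)
  also have "\<dots> \<le> j * L" using lt cp L(1) unfolding j_def by (intro mult_right_mono) auto
  finally have a1: "p < j*L" .
  have "j*L \<le> (p' div L) * L" using j2 L(1) by (intro mult_right_mono) auto
  also have "\<dots> \<le> p'" using L(1) by (simp add: mult.commute minus_mod_eq_mult_div[symmetric])
  finally have a2: "j*L \<le> p'" .
  have "dk k p (j*L) \<le> \<bar>p - j*L - 0*k\<bar>" by (rule dk_le[OF k])
  then have "dk k p (j*L) \<le> r" using a1 a2 d by simp
  moreover have "r < dk k p (j*L)" using g j0 j1 unfolding goodp_def by auto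
  ultimately show False by simp
qed

lemma cell_same:
  assumes k: "k > 0" and L: "L > 0" "L \<le> k" and p: "0 \<le> p" "p < k" "0 \<le> p'" "p' < k"
    and d: "\<bar>p - p' - z*k\<bar> \<le> r" and g: "goodp k r L p" "goodp k r L p'"
  shows "cellf k L p = cellf k L p'"
proof -
  have Q: "0 < k div L" using L zdiv_mono1[of L k L] by simp
  have g0: "r < dk k q 0" if "goodp k r L q" for q using that Q unfolding goodp_def by force
  consider "z = 0" | "z \<ge> 1" | "z \<le> -1" by linarith
  then show ?thesis
  proof cases
    case 1
    show ?thesis
    proof (cases "p \<le> p'")
      case True then show ?thesis using cell_same_aux[OF k L p(1) True p(4) _ g(1)] d 1 by simp
    next
      case False then show ?thesis using cell_same_aux[OF k L p(3) _ p(2) _ g(2)] d 1 by simp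
    qed
  next
    case 2
    have "z*k \<ge> k" using 2 k mult_right_mono[of 1 z k] by simp
    then have "p' < r" using d p by linarith
    moreover have "dk k p' 0 \<le> \<bar>p' - 0 - 0*k\<bar>" by (rule dk_le[OF k])
    ultimately show ?thesis using g0[OF g(2)] p by simp
  next
    case 3
    have "z*k \<le> -k" using 3 k mult_right_mono[of z "-1" k] by simp
    then have "p < r" using d p by linarith
    moreover have "dk k p 0 \<le> \<bar>p - 0 - 0*k\<bar>" by (rule dk_le[OF k])
    ultimately show ?thesis using g0[OF g(1)] p by simp
  qed
qed

lemma cell_diam:
  assumes k: "k > 0" and L: "L > 0" "L \<le> k" and p: "0 \<le> p" "p < k" "0 \<le> p'" "p' < k"
    and c: "cellf k L p = cellf k L p'"
  shows "\<bar>p - p'\<bar> < 2*L"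
proof -
  define Q where "Q = k div L"
  have kQ: "k < (Q+1)*L" unfolding Q_def using L(1)
    by (metis add.commute distrib_right div_mult_mod_eq mult_1 pos_mod_bound add_less_cancel_left mult.commute)
  have lo: "(x div L) * L \<le> x" for x using L(1) by (simp add: mult.commute minus_mod_eq_mult_div[symmetric])
  have hi: "x < (x div L + 1) * L" for x using L(1)
    by (metis add.commute mult.commute pos_mod_bound div_mult_mod_eq distrib_left mult_1_right add_less_cancel_left)
  show ?thesis
  proof (cases "p div L \<ge> Q - 1 \<and> p' div L \<ge> Q - 1")
    case True
    have "(Q-1)*L \<le> (p div L)*L" "(Q-1)*L \<le> (p' div L)*L" using True L(1) by (auto intro: mult_right_mono)
    then have "(Q-1)*L \<le> p" "(Q-1)*L \<le> p'" using lo[of p] lo[of p'] by linarith+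
    then show ?thesis using kQ p by (simp add: algebra_simps)
  next
    case False
    then have "p div L = p' div L" using c unfolding cellf_def Q_def[symmetric] by (auto simp: min_def split: if_splits)
    then show ?thesis using lo[of p] lo[of p'] hi[of p] hi[of p'] L by (simp add: algebra_simps)
  qed
qed


lemma bad_shift:
  assumes k: "k > 0" and nb: "\<not> goodp k r L (posn k m i t)"
  shows "\<exists>j z. 0 \<le> j \<and> j < k div L \<and> \<bar>t - int i*m - j*L - z*k\<bar> \<le> r"
proof -
  obtain j where j: "0 \<le> j" "j < k div L" "dk k (posn k m i t) (j*L) \<le> r"
    using nb unfolding goodp_def by force
  obtain z where z: "dk k (posn k m i t) (j*L) = \<bar>posn k m i t - j*L - z*k\<bar>" using dk_ex[OF k] by blast
  define w where "w = (t - int i * m) div k"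
  have "posn k m i t = t - int i*m - w*k" unfolding posn_def w_def
    by (simp add: minus_div_mult_eq_mod[symmetric] mult.commute)
  then have "\<bar>t - int i*m - j*L - (z+w)*k\<bar> \<le> r" using z j(3) by (simp add: algebra_simps)
  then show ?thesis using j by blast
qed

lemma cover_pair:
  assumes r: "r \<ge> 0" and m: "m = 2*r+1" and L: "L = (int n+1)*m" and k: "0 < k" "L \<le> k"
    and i: "i \<le> n" "i' \<le> n" "i \<noteq> i'"
    and b1: "\<not> goodp k r L (posn k m i t)" and b2: "\<not> goodp k r L (posn k m i' t)"
  shows False
proof -
  define Q where "Q = k div L"
  obtain j z where jz: "0 \<le> j" "j < Q" "\<bar>t - int i*m - j*L - z*k\<bar> \<le> r"
    using bad_shift[OF k(1) b1] unfolding Q_def by blast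
  obtain j' z' where jz': "0 \<le> j'" "j' < Q" "\<bar>t - int i'*m - j'*L - z'*k\<bar> \<le> r"
    using bad_shift[OF k(1) b2] unfolding Q_def by blast
  define e where "e = (int i' - int i) + (j' - j)*(int n+1)"
  define Z where "Z = z - z'"
  have eq: "e*m - Z*k = (t - int i*m - j*L - z*k) - (t - int i'*m - j'*L - z'*k)"
    unfolding e_def Z_def L by (simp add: algebra_simps)
  have key: "\<bar>e*m - Z*k\<bar> \<le> 2*r" unfolding eq using jz(3) jz'(3) by linarith
  have Lpos: "L > 0" using L m r by simp
  have QL: "Q*L \<le> k" unfolding Q_def using Lpos by (simp add: mult.commute minus_mod_eq_mult_div[symmetric])
  have ii: "\<bar>int i' - int i\<bar> \<le> int n" "int i' - int i \<noteq> 0" using i by auto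
  have e0: "e \<noteq> 0"
  proof (cases "j' = j")
    case True then show ?thesis using ii unfolding e_def by simp
  next
    case False
    then have "1 \<le> \<bar>j' - j\<bar>" by simp
    then have "1 * (int n+1) \<le> \<bar>j' - j\<bar> * (int n + 1)" by (intro mult_right_mono) auto
    then have "int n + 1 \<le> \<bar>(j' - j) * (int n + 1)\<bar>" by (simp add: abs_mult)
    then show ?thesis using ii unfolding e_def by linarith
  qed
  have jj: "\<bar>j' - j\<bar> \<le> Q - 1" using jz jz' by simp
  have "\<bar>(j' - j)*(int n+1)\<bar> = \<bar>j' - j\<bar> * (int n+1)" by (simp add: abs_mult)
  also have "\<dots> \<le> (Q - 1) * (int n + 1)" using jj by (intro mult_right_mono) auto
  finally have "\<bar>e\<bar> \<le> int n + (Q - 1)*(int n+1)" using ii unfolding e_def by linarith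
  then have eb: "\<bar>e\<bar> \<le> Q*(int n+1) - 1" by (simp add: algebra_simps)
  have mpos: "m > 0" using m r by simp
  have "\<bar>e\<bar>*m \<le> (Q*(int n+1) - 1)*m" using eb mpos by (intro mult_right_mono) auto
  then have em: "\<bar>e*m\<bar> \<le> k - m" using QL mpos unfolding L by (simp add: abs_mult algebra_simps)
  have em1: "m \<le> \<bar>e*m\<bar>" using e0 mpos by (simp add: abs_mult)
  show False
  proof (cases "Z = 0")
    case True then show ?thesis using key em1 m by simp
  next
    case False
    then have "1*k \<le> \<bar>Z\<bar>*k" using k by (intro mult_right_mono) auto
    then have "k \<le> \<bar>Z*k\<bar>" using k by (simp add: abs_mult)
    then show ?thesis using key em m by linarith
  qed
qed


lemma dkn_coord:
  assumes k: "k > 0" and j: "j < length y"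
  shows "dk k (y!j) (w!j) \<le> dkn k y w"
  unfolding dkn_def using j by (intro member_le_sum) (auto intro: dk_nonneg[OF k])

lemma dkn_bound:
  assumes "\<And>j. j < length y \<Longrightarrow> dk k (y!j) (w!j) \<le> B"
  shows "dkn k y w \<le> int (length y) * B"
  unfolding dkn_def using sum_bounded_above[of "{..<length y}" "\<lambda>j. dk k (y!j) (w!j)" B] assms by simp

lemma dk_self: "k > 0 \<Longrightarrow> dk k a a = 0"
  by (simp add: dk_alt)

lemma dk_zero: assumes k: "k > 0" and a: "0 \<le> a" "a < k" and b: "0 \<le> b" "b < k" and d: "dk k a b = 0"
  shows "a = b"
proof -
  define q where "q = (a-b) mod k"
  have q: "0 \<le> q" "q < k" using k unfolding q_def by simp_all
  have e: "min q (k - q) = 0" using d dk_alt[OF k, of a b] unfolding q_def by simp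
  have "q = 0" using e q by (simp add: min_def split: if_splits)
  then have "(a-b) mod k = 0" unfolding q_def .
  then have "k dvd (a - b)" by (simp add: mod_eq_0_iff_dvd)
  then obtain c where c: "a - b = k*c" by (auto elim: dvdE)
  have "c = 0"
  proof (rule ccontr)
    assume "c \<noteq> 0"
    then have "k \<le> \<bar>k*c\<bar>" using k by (simp add: abs_mult)
    then show False using c a b by linarith
  qed
  then show ?thesis using c by simp
qed

lemma scale_rel_mem:
  assumes "(x, y) \<in> scale_rel d s U" "x \<in> U" shows "y \<in> U"
  using assms unfolding scale_rel_def by (induction rule: rtrancl_induct) auto

lemma diam_le:
  assumes "x \<in> A" "\<And>y w. y \<in> A \<Longrightarrow> w \<in> A \<Longrightarrow> d y w \<le> B"
  shows "diam_d d A \<le> B"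
  unfolding diam_d_def using assms by (intro cSup_least) auto

definition Ugood :: "int \<Rightarrow> int \<Rightarrow> int \<Rightarrow> int \<Rightarrow> nat \<Rightarrow> nat \<Rightarrow> int list set" where
  "Ugood k r L m n i = {xs \<in> Zkn k n. \<forall>t \<in> set xs. goodp k r L (posn k m i t)}"

lemma cover_ex:
  assumes r: "r \<ge> 0" and m: "m = 2*r+1" and L: "L = (int n+1)*m" and k: "0 < k" "L \<le> k"
    and x: "xs \<in> Zkn k n"
  shows "\<exists>i\<le>n. \<forall>t\<in>set xs. goodp k r L (posn k m i t)"
proof (rule ccontr)
  assume "\<not> ?thesis"
  then have h: "\<forall>i\<in>{..n}. \<exists>t. t \<in> set xs \<and> \<not> goodp k r L (posn k m i t)" by auto
  define f where "f i = (SOME t. t \<in> set xs \<and> \<not> goodp k r L (posn k m i t))" for i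
  have f: "f i \<in> set xs \<and> \<not> goodp k r L (posn k m i (f i))" if "i \<in> {..n}" for i
    unfolding f_def using someI_ex[OF h[rule_format, OF that]] .
  have inj: "inj_on f {..n}"
  proof (rule inj_onI)
    fix i i' assume ii: "i \<in> {..n}" "i' \<in> {..n}" "f i = f i'"
    show "i = i'"
    proof (rule ccontr)
      assume "i \<noteq> i'"
      then show False using cover_pair[OF r m L k, of i i' "f i"] f[OF ii(1)] f[OF ii(2)] ii by auto
    qed
  qed
  have sub: "f ` {..n} \<subseteq> set xs" using f by auto
  have "card {..n} \<le> card (set xs)" using card_inj_on_le[OF inj sub] by simp
  also have "\<dots> \<le> length xs" by (rule card_length)
  also have "\<dots> = n" using x unfolding Zkn_def by simp
  finally show False by simp
qed

lemma chain_inv: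
  assumes r: "r \<ge> 0" and m: "m = 2*r+1" and L: "L = (int n+1)*m" and k: "0 < k" "L \<le> k"
    and s: "s \<le> real_of_int r"
    and xy: "(x, y) \<in> scale_rel (\<lambda>x y. real_of_int (dkn k x y)) s (Ugood k r L m n i)"
    and x: "x \<in> Ugood k r L m n i"
  shows "y \<in> Ugood k r L m n i \<and> (\<forall>j<n. cellf k L (posn k m i (x!j)) = cellf k L (posn k m i (y!j)))"
  using xy unfolding scale_rel_def
proof (induction rule: rtrancl_induct)
  case base then show ?case using x by simp
next
  case (step y w)
  have yw: "y \<in> Ugood k r L m n i" "w \<in> Ugood k r L m n i" "real_of_int (dkn k y w) < s" using step(2) by auto
  have ly: "length y = n" "length w = n" using yw unfolding Ugood_def Zkn_def by auto
  have Lpos: "L > 0" using L m r by simp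
  have "cellf k L (posn k m i (y!j)) = cellf k L (posn k m i (w!j))" if j: "j < n" for j
  proof -
    have "dk k (y!j) (w!j) \<le> dkn k y w" using dkn_coord[OF k(1)] j ly by simp
    then have "real_of_int (dk k (y!j) (w!j)) < real_of_int r" using yw(3) s by linarith
    then have d1: "dk k (y!j) (w!j) \<le> r" by simp
    have "dk k (posn k m i (y!j)) (posn k m i (w!j)) = dk k (y!j) (w!j)"
      unfolding posn_def by (rule dk_shift[OF k(1)])
    moreover obtain z where "dk k (posn k m i (y!j)) (posn k m i (w!j)) = \<bar>posn k m i (y!j) - posn k m i (w!j) - z*k\<bar>"
      using dk_ex[OF k(1), of "posn k m i (y!j)" "posn k m i (w!j)"] by blast
    ultimately have z: "\<bar>posn k m i (y!j) - posn k m i (w!j) - z*k\<bar> \<le> r" using d1 by simp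
    have gy: "goodp k r L (posn k m i (y!j))" using yw(1) j ly unfolding Ugood_def by auto
    have gw: "goodp k r L (posn k m i (w!j))" using yw(2) j ly unfolding Ugood_def by auto
    show ?thesis
      by (rule cell_same[OF k(1) Lpos k(2) _ _ _ _ z gy gw]) (use k in \<open>simp_all add: posn_def\<close>)
  qed
  then show ?case using step(3) yw(2) by simp
qed

lemma comp_bound:
  assumes r: "r \<ge> 0" and m: "m = 2*r+1" and L: "L = (int n+1)*m" and k: "0 < k" "L \<le> k"
    and s: "s \<le> real_of_int r"
    and A: "A \<in> scale_components (\<lambda>x y. real_of_int (dkn k x y)) s (Ugood k r L m n i)"
    and y: "y \<in> A" and w: "w \<in> A"
  shows "dkn k y w \<le> int n * (2*L)"
proof -
  obtain x where x: "x \<in> Ugood k r L m n i" "A = scale_rel (\<lambda>x y. real_of_int (dkn k x y)) s (Ugood k r L m n i) `` {x}"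
    using A unfolding scale_components_def by auto
  have cy: "y \<in> Ugood k r L m n i \<and> (\<forall>j<n. cellf k L (posn k m i (x!j)) = cellf k L (posn k m i (y!j)))"
    using chain_inv[OF r m L k s _ x(1)] y x(2) by auto
  have cw: "w \<in> Ugood k r L m n i \<and> (\<forall>j<n. cellf k L (posn k m i (x!j)) = cellf k L (posn k m i (w!j)))"
    using chain_inv[OF r m L k s _ x(1)] w x(2) by auto
  have ly: "length y = n" using cy unfolding Ugood_def Zkn_def by auto
  have Lpos: "L > 0" using L m r by simp
  have "dk k (y!j) (w!j) \<le> 2*L" if j: "j < length y" for j
  proof -
    have c: "cellf k L (posn k m i (y!j)) = cellf k L (posn k m i (w!j))" using cy cw j ly by auto
    have "\<bar>posn k m i (y!j) - posn k m i (w!j)\<bar> < 2*L"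
      by (rule cell_diam[OF k(1) Lpos k(2) _ _ _ _ c]) (use k in \<open>simp_all add: posn_def\<close>)
    moreover have "dk k (posn k m i (y!j)) (posn k m i (w!j)) = dk k (y!j) (w!j)"
      unfolding posn_def by (rule dk_shift[OF k(1)])
    moreover have "dk k (posn k m i (y!j)) (posn k m i (w!j)) \<le> \<bar>posn k m i (y!j) - posn k m i (w!j) - 0*k\<bar>"
      by (rule dk_le[OF k(1)])
    ultimately show ?thesis by simp
  qed
  then show ?thesis using dkn_bound[of y k w "2*L"] ly by simp
qed


lemma rel_small:
  assumes k: "k > 0" and s: "s \<le> 1"
    and xy: "(x, y) \<in> scale_rel (\<lambda>x y. real_of_int (dkn k x y)) s (Zkn k n)"
  shows "y = x"
  using xy unfolding scale_rel_def
proof (induction rule: rtrancl_induct)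
  case base then show ?case by simp
next
  case (step y w)
  have yw: "y \<in> Zkn k n" "w \<in> Zkn k n" "real_of_int (dkn k y w) < s" using step(2) by auto
  have ly: "length y = n" "length w = n" "set y \<subseteq> {0..<k}" "set w \<subseteq> {0..<k}" using yw unfolding Zkn_def by auto
  have "y ! j = w ! j" if j: "j < n" for j
  proof -
    have "dk k (y!j) (w!j) \<le> dkn k y w" using dkn_coord[OF k] j ly by simp
    then have "dk k (y!j) (w!j) < 1" using yw(3) s by linarith
    then have "dk k (y!j) (w!j) = 0" using dk_nonneg[OF k, of "y!j" "w!j"] by simp
    moreover have "y!j \<in> set y" "w!j \<in> set w" using ly j by simp_all
    then have "y!j \<in> {0..<k}" "w!j \<in> {0..<k}" using ly(3,4) by blast+
    ultimately show ?thesis using dk_zero[OF k] by auto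
  qed
  then have "y = w" using ly by (intro nth_equalityI) auto
  then show ?case using step(3) by simp
qed

lemma dkn_self: "k > 0 \<Longrightarrow> dkn k x x = 0"
  unfolding dkn_def by (simp add: dk_self)

lemma arith_bound:
  assumes s: "s > 1" and r: "r = \<lceil>s\<rceil>"
  shows "real_of_int (int n * (2*((int n+1)*(2*r+1)))) \<le> 10*(real n+1)^2*s"
proof -
  have "real_of_int r \<le> s + 1" using r of_int_ceiling_le_add_one[of s] by simp
  then have m5: "real_of_int (2*r+1) \<le> 5*s" using s by simp
  have "real_of_int (int n * (2*((int n+1)*(2*r+1)))) = (2*real n*(real n+1)) * real_of_int (2*r+1)"
    by simp
  also have "\<dots> \<le> (2*real n*(real n+1)) * (5*s)" using m5 by (intro mult_left_mono) auto
  also have "\<dots> = 10*(real n*(real n+1))*s" by simp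
  also have "\<dots> \<le> 10*((real n+1)*(real n+1))*s" using s by (intro mult_right_mono mult_left_mono) auto
  finally show ?thesis by (simp add: power2_eq_square)
qed

theorem lemma4p9:
  "\<forall>n::nat. \<exists>C::real. C \<ge> 1 \<and>
     (\<forall>(s::real) (k::int). s > 0 \<longrightarrow> k > 1 \<longrightarrow>
        (\<exists>U :: nat \<Rightarrow> int list set.
           (\<forall>i\<le>n. U i \<subseteq> Zkn k n) \<and> (\<Union>i\<le>n. U i) = Zkn k n \<and>
           (\<forall>i\<le>n. \<forall>A \<in> scale_components (\<lambda>x y. real_of_int (dkn k x y)) s (U i).
               diam_d (\<lambda>x y. real_of_int (dkn k x y)) A \<le> C * s)))"
proof (intro allI)
  fix n :: nat
  define C where "C = 10*(real n+1)^2"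
  have C1: "C \<ge> 1" unfolding C_def
  proof -
    have "1 \<le> (real n + 1)^2" by (simp add: one_le_power)
    then show "1 \<le> 10*(real n+1)^2" by linarith
  qed
  show "\<exists>C::real. C \<ge> 1 \<and>
     (\<forall>(s::real) (k::int). s > 0 \<longrightarrow> k > 1 \<longrightarrow>
        (\<exists>U :: nat \<Rightarrow> int list set.
           (\<forall>i\<le>n. U i \<subseteq> Zkn k n) \<and> (\<Union>i\<le>n. U i) = Zkn k n \<and>
           (\<forall>i\<le>n. \<forall>A \<in> scale_components (\<lambda>x y. real_of_int (dkn k x y)) s (U i).
               diam_d (\<lambda>x y. real_of_int (dkn k x y)) A \<le> C * s)))"
  proof (rule exI[of _ C], intro conjI allI impI C1)
    fix s :: real and k :: int
    assume s: "s > 0" and k1: "k > 1"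
    have k: "k > 0" using k1 by simp
    let ?d = "\<lambda>x y. real_of_int (dkn k x y)"
    show "\<exists>U :: nat \<Rightarrow> int list set.
           (\<forall>i\<le>n. U i \<subseteq> Zkn k n) \<and> (\<Union>i\<le>n. U i) = Zkn k n \<and>
           (\<forall>i\<le>n. \<forall>A \<in> scale_components ?d s (U i). diam_d ?d A \<le> C * s)"
    proof (cases "s \<le> 1")
      case True
      have "diam_d ?d A \<le> C * s" if A: "A \<in> scale_components ?d s (Zkn k n)" for A
      proof -
        obtain x where x: "x \<in> Zkn k n" "A = scale_rel ?d s (Zkn k n) `` {x}"
          using A unfolding scale_components_def by auto
        have xA: "x \<in> A" using x unfolding scale_rel_def by auto
        have yx: "y = x" if "y \<in> A" for y using rel_small[OF k True] that x(2) by auto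
        have "0 \<le> C * s" using C1 s by simp
        moreover have "?d y w = 0" if "y \<in> A" "w \<in> A" for y w
          using yx[OF that(1)] yx[OF that(2)] dkn_self[OF k] by simp
        ultimately show ?thesis by (intro diam_le[OF xA]) auto
      qed
      then show ?thesis by (intro exI[of _ "\<lambda>_. Zkn k n"]) auto
    next
      case False
      then have s1: "s > 1" by simp
      define r where "r = \<lceil>s\<rceil>"
      define m where "m = 2*r+1"
      define L where "L = (int n+1)*m"
      have r0: "r \<ge> 0" unfolding r_def using s by simp
      have sr: "s \<le> real_of_int r" unfolding r_def by simp
      have B: "real_of_int (int n * (2*L)) \<le> C*s"
        unfolding L_def m_def C_def using arith_bound[OF s1 r_def] by simp
      show ?thesis
      proof (cases "k < L")
        case True
        have "diam_d ?d A \<le> C * s" if A: "A \<in> scale_components ?d s (Zkn k n)" for A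
        proof -
          obtain x where x: "x \<in> Zkn k n" "A = scale_rel ?d s (Zkn k n) `` {x}"
            using A unfolding scale_components_def by auto
          have xA: "x \<in> A" using x unfolding scale_rel_def by auto
          have inZ: "y \<in> Zkn k n" if "y \<in> A" for y using scale_rel_mem[of x y ?d s] that x by auto
          have "?d y w \<le> C*s" if "y \<in> A" "w \<in> A" for y w
          proof -
            have ly: "length y = n" using inZ[OF that(1)] unfolding Zkn_def by simp
            have "dkn k y w \<le> int n * k" using dkn_bound[of y k w k] dk_le_k[OF k] ly by simp
            also have "\<dots> \<le> int n * (2*L)" using True k by (intro mult_left_mono) auto
            finally show ?thesis using B by linarith
          qed
          then show ?thesis by (intro diam_le[OF xA])
        qed
        then show ?thesis by (intro exI[of _ "\<lambda>_. Zkn k n"]) auto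
      next
        case False
        then have kL: "L \<le> k" by simp
        have cov: "(\<Union>i\<le>n. Ugood k r L m n i) = Zkn k n"
        proof
          show "(\<Union>i\<le>n. Ugood k r L m n i) \<subseteq> Zkn k n" unfolding Ugood_def by auto
          show "Zkn k n \<subseteq> (\<Union>i\<le>n. Ugood k r L m n i)"
          proof
            fix xs assume xs: "xs \<in> Zkn k n"
            obtain i where "i \<le> n" "\<forall>t\<in>set xs. goodp k r L (posn k m i t)"
              using cover_ex[OF r0 m_def L_def k kL xs] by blast
            then show "xs \<in> (\<Union>i\<le>n. Ugood k r L m n i)" using xs unfolding Ugood_def by auto
          qed
        qed
        have "diam_d ?d A \<le> C * s" if A: "A \<in> scale_components ?d s (Ugood k r L m n i)" for A i
        proof -
          obtain x where x: "x \<in> Ugood k r L m n i" "A = scale_rel ?d s (Ugood k r L m n i) `` {x}"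
            using A unfolding scale_components_def by auto
          have xA: "x \<in> A" using x unfolding scale_rel_def by auto
          have "?d y w \<le> C*s" if "y \<in> A" "w \<in> A" for y w
            using comp_bound[OF r0 m_def L_def k kL sr A that] B by linarith
          then show ?thesis by (intro diam_le[OF xA])
        qed
        then show ?thesis using cov
          by (intro exI[of _ "Ugood k r L m n"]) (auto simp: Ugood_def)
      qed
    qed
  qed
qed

end
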